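(* Let $q(n)$ denote the number of partitions of $n$ into distinct parts, with $q(0)=1$ and $q(n)=0$ for $n<0$, and define $s(n)=q(n)-2q(n-1)+q(n-2)$. Then for every integer $n\ge 6$, $s(n)$ equals the number of partitions of $n$ with parts $q_1\ge q_2\ge\dots\ge q_h$ such that $h\ge 3$, $q_j-q_{j+1}\in\{0,1\}$ for all $1\le j<h$, $q_1=q_2$, and the two smallest parts are both equal to $3$: $q_{h-1}=q_h=3$.
   Context: $q(n)$ counts strict partitions (partitions into distinct parts) of $n$. *)

theory Defs
  imports Main
begin

definition partitions :: "nat \<Rightarrow> nat list set" where
  "partitions n = {xs. sorted_wrt (\<ge>) xs \<and> (\<forall>x\<in>set xs. 0 < x) \<and> sum_list xs = n}"

definition q :: "int \<Rightarrow> int" where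
  "q n = (if n < 0 then 0
          else int (card {xs \<in> partitions (nat n). distinct xs}))"

definition s :: "int \<Rightarrow> int" where
  "s n = q n - 2 * q (n - 1) + q (n - 2)"

end

theory Submission
  imports Defs
begin


fun up :: "nat list \<Rightarrow> bool" where
  "up [] = True"
| "up [x] = True"
| "up (x # y # r) = ((y = x \<or> y = Suc x) \<and> up (y # r))"

lemma up_Cons: "up (x # r) \<longleftrightarrow> r = [] \<or> (up r \<and> (hd r = x \<or> hd r = Suc x))"
  by (cases r) auto

lemma up_hd_le: "up ys \<Longrightarrow> ys \<noteq> [] \<Longrightarrow> \<forall>z\<in>set ys. hd ys \<le> z"
  by (induction ys rule: up.induct) auto

lemma up_map_Suc: "up (map Suc zs) = up zs"
  by (induction zs rule: up.induct) auto

lemma up_snoc2: "up (zs @ [x, y]) \<longleftrightarrow> up (zs @ [x]) \<and> (y = x \<or> y = Suc x)"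
  by (induction zs) (auto simp: up_Cons hd_append)

lemma up_nth: "up ys \<longleftrightarrow> (\<forall>j. Suc j < length ys \<longrightarrow> ys!(Suc j) = ys!j \<or> ys!(Suc j) = Suc (ys!j))"
proof (induction ys rule: up.induct)
  case (3 x y r)
  show ?case
  proof
    assume h: "up (x # y # r)"
    show "\<forall>j. Suc j < length (x # y # r) \<longrightarrow> (x # y # r) ! Suc j = (x # y # r) ! j \<or> (x # y # r) ! Suc j = Suc ((x # y # r) ! j)"
    proof (intro allI impI)
      fix j assume j: "Suc j < length (x # y # r)"
      show "(x # y # r) ! Suc j = (x # y # r) ! j \<or> (x # y # r) ! Suc j = Suc ((x # y # r) ! j)"
      proof (cases j)
        case 0 then show ?thesis using h by auto
      next
        case (Suc k) then show ?thesis using h 3 j by auto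
      qed
    qed
  next
    assume h: "\<forall>j. Suc j < length (x # y # r) \<longrightarrow> (x # y # r) ! Suc j = (x # y # r) ! j \<or> (x # y # r) ! Suc j = Suc ((x # y # r) ! j)"
    have a: "y = x \<or> y = Suc x" using h[rule_format, of 0] by auto
    have "up (y # r)" unfolding 3
    proof (intro allI impI)
      fix k assume "Suc k < length (y # r)"
      then show "(y # r) ! Suc k = (y # r) ! k \<or> (y # r) ! Suc k = Suc ((y # r) ! k)"
        using h[rule_format, of "Suc k"] by auto
    qed
    then show "up (x # y # r)" using a by simp
  qed
qed auto

lemma len_le_sum: "(\<forall>x\<in>set xs. (0::nat) < x) \<Longrightarrow> length xs \<le> sum_list xs"
  by (induction xs) auto

lemma fin_pos: "finite {xs::nat list. (\<forall>x\<in>set xs. 0 < x) \<and> sum_list xs = N}"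
proof -
  have "{xs::nat list. (\<forall>x\<in>set xs. 0 < x) \<and> sum_list xs = N} \<subseteq> {xs. set xs \<subseteq> {..N} \<and> length xs \<le> N}"
  proof
    fix xs :: "nat list" assume "xs \<in> {xs. (\<forall>x\<in>set xs. 0 < x) \<and> sum_list xs = N}"
    then have p: "\<forall>x\<in>set xs. 0 < x" and s: "sum_list xs = N" by auto
    have "set xs \<subseteq> {..N}" using s member_le_sum_list[of _ xs] by fastforce
    moreover have "length xs \<le> N" using len_le_sum[OF p] s by simp
    ultimately show "xs \<in> {xs. set xs \<subseteq> {..N} \<and> length xs \<le> N}" by simp
  qed
  moreover have "finite {xs::nat list. set xs \<subseteq> {..N} \<and> length xs \<le> N}"
    by (rule finite_lists_length_le) simp
  ultimately show ?thesis by (rule finite_subset)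
qed

definition Aset :: "nat \<Rightarrow> nat \<Rightarrow> nat list set" where
  "Aset a N = {ys. ys \<noteq> [] \<and> up ys \<and> hd ys = a \<and> sum_list ys = N}"

lemma Aset_pos: "1 \<le> a \<Longrightarrow> ys \<in> Aset a N \<Longrightarrow> \<forall>x\<in>set ys. 0 < x"
  unfolding Aset_def using up_hd_le by fastforce

lemma Aset_fin: "1 \<le> a \<Longrightarrow> finite (Aset a N)"
proof (rule finite_subset[OF _ fin_pos[of N]])
  assume "1 \<le> a"
  show "Aset a N \<subseteq> {xs. (\<forall>x\<in>set xs. 0 < x) \<and> sum_list xs = N}"
    using Aset_pos[OF \<open>1 \<le> a\<close>] by (auto simp: Aset_def)
qed

lemma Aset_small: "N < a \<Longrightarrow> Aset a N = {}"
proof -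
  assume "N < a"
  { fix ys assume "ys \<in> Aset a N"
    then have "hd ys \<in> set ys" "sum_list ys = N" "hd ys = a" unfolding Aset_def by auto
    then have "a \<le> N" using member_le_sum_list[of "hd ys" ys] by fastforce }
  then show ?thesis using \<open>N < a\<close> by fastforce
qed



lemma A_rec:
  assumes a: "1 \<le> a" and aN: "a \<le> N"
  shows "card (Aset a N) = (if N = a then 1 else 0) + card (Aset a (N-a)) + card (Aset (Suc a) (N-a))"
proof -
  let ?Z = "(if N = a then {[]} else {}) :: nat list set"
  have eq: "Aset a N = (Cons a) ` (?Z \<union> Aset a (N-a) \<union> Aset (Suc a) (N-a))"
  proof (rule set_eqI)
    fix ys
    show "ys \<in> Aset a N \<longleftrightarrow> ys \<in> (Cons a) ` (?Z \<union> Aset a (N-a) \<union> Aset (Suc a) (N-a))"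
    proof
      assume "ys \<in> Aset a N"
      then obtain r where ys: "ys = a # r" and u: "up (a # r)" and sm: "a + sum_list r = N"
        unfolding Aset_def by (cases ys) auto
      have "r \<in> ?Z \<union> Aset a (N-a) \<union> Aset (Suc a) (N-a)"
        using u sm by (auto simp: Aset_def up_Cons)
      then show "ys \<in> (Cons a) ` (?Z \<union> Aset a (N-a) \<union> Aset (Suc a) (N-a))" using ys by blast
    next
      assume "ys \<in> (Cons a) ` (?Z \<union> Aset a (N-a) \<union> Aset (Suc a) (N-a))"
      then obtain r where ys: "ys = a # r" and r: "r \<in> ?Z \<union> Aset a (N-a) \<union> Aset (Suc a) (N-a)" by blast
      show "ys \<in> Aset a N" using r aN unfolding ys by (auto simp: Aset_def up_Cons split: if_splits)
    qed
  qed
  have f1: "finite (Aset a (N-a))" "finite (Aset (Suc a) (N-a))" using a by (auto intro: Aset_fin)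
  have d1: "?Z \<inter> (Aset a (N-a) \<union> Aset (Suc a) (N-a)) = {}" by (auto simp: Aset_def)
  have d2: "Aset a (N-a) \<inter> Aset (Suc a) (N-a) = {}" by (auto simp: Aset_def)
  have "card (Aset a N) = card (?Z \<union> (Aset a (N-a) \<union> Aset (Suc a) (N-a)))"
    unfolding eq by (subst card_image) (auto simp: Un_assoc)
  also have "\<dots> = card ?Z + card (Aset a (N-a) \<union> Aset (Suc a) (N-a))"
    by (rule card_Un_disjoint) (use f1 d1 in auto)
  also have "card (Aset a (N-a) \<union> Aset (Suc a) (N-a)) = card (Aset a (N-a)) + card (Aset (Suc a) (N-a))"
    by (rule card_Un_disjoint) (use f1 d2 in auto)
  finally show ?thesis by simp
qed

definition Bset :: "nat \<Rightarrow> nat \<Rightarrow> nat list set" where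
  "Bset a N = {ys \<in> Aset a N. 2 \<le> length ys \<and> ys ! (length ys - 1) = ys ! (length ys - 2)}"

definition Cset :: "nat \<Rightarrow> nat \<Rightarrow> nat list set" where
  "Cset a N = {ys \<in> Aset a N. 2 \<le> length ys \<and> ys ! (length ys - 1) \<noteq> ys ! (length ys - 2)}"

lemma two_split: "2 \<le> length ys \<Longrightarrow> \<exists>zs x y. ys = zs @ [x, y]"
proof -
  assume "2 \<le> length ys"
  then obtain ws y where "ys = ws @ [y]" by (cases ys rule: rev_cases) auto
  moreover with \<open>2 \<le> length ys\<close> obtain zs x where "ws = zs @ [x]" by (cases ws rule: rev_cases) auto
  ultimately show ?thesis by auto
qed

lemma A_split:
  assumes "1 \<le> a"
  shows "card (Aset a N) = (if N = a then 1 else 0) + card (Bset a N) + card (Cset a N)"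
proof -
  let ?Z = "(if N = a then {[a]} else {}) :: nat list set"
  have eq: "Aset a N = ?Z \<union> (Bset a N \<union> Cset a N)"
  proof (rule set_eqI)
    fix ys show "ys \<in> Aset a N \<longleftrightarrow> ys \<in> ?Z \<union> (Bset a N \<union> Cset a N)"
    proof
      assume h: "ys \<in> Aset a N"
      show "ys \<in> ?Z \<union> (Bset a N \<union> Cset a N)"
      proof (cases "2 \<le> length ys")
        case True then show ?thesis using h by (auto simp: Bset_def Cset_def)
      next
        case False
        from h have "ys \<noteq> []" by (simp add: Aset_def)
        with False obtain x where "ys = [x]" by (cases ys; cases "tl ys") auto
        with h show ?thesis by (auto simp: Aset_def)
      qed
    next
      assume "ys \<in> ?Z \<union> (Bset a N \<union> Cset a N)"
      then show "ys \<in> Aset a N" by (auto simp: Aset_def Bset_def Cset_def split: if_splits)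
    qed
  qed
  have f: "finite (Bset a N)" "finite (Cset a N)"
    using Aset_fin[OF assms, of N] by (auto simp: Bset_def Cset_def)
  have "card (Aset a N) = card ?Z + card (Bset a N \<union> Cset a N)"
    unfolding eq by (rule card_Un_disjoint) (use f in \<open>auto simp: Bset_def Cset_def\<close>)
  also have "card (Bset a N \<union> Cset a N) = card (Bset a N) + card (Cset a N)"
    by (rule card_Un_disjoint) (use f in \<open>auto simp: Bset_def Cset_def\<close>)
  finally show ?thesis by simp
qed

lemma C_zero: "1 \<le> a \<Longrightarrow> Cset a 0 = {}"
  using Aset_small[of 0 a] by (auto simp: Cset_def)

lemma C_Suc:
  assumes "1 \<le> a"
  shows "card (Cset a (Suc M)) = card (Bset a M)"
proof -
  let ?g = "\<lambda>ys. butlast ys @ [Suc (last ys)]"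
  have inj: "inj_on ?g (Bset a M)"
  proof (rule inj_onI)
    fix u v assume "u \<in> Bset a M" "v \<in> Bset a M" and e: "?g u = ?g v"
    then have "u \<noteq> []" "v \<noteq> []" by (auto simp: Bset_def Aset_def)
    from e have "butlast u = butlast v" "last u = last v" by auto
    then show "u = v" using \<open>u \<noteq> []\<close> \<open>v \<noteq> []\<close> by (metis append_butlast_last_id)
  qed
  have img: "?g ` Bset a M = Cset a (Suc M)"
  proof (rule set_eqI)
    fix ys show "ys \<in> ?g ` Bset a M \<longleftrightarrow> ys \<in> Cset a (Suc M)"
    proof
      assume "ys \<in> ?g ` Bset a M"
      then obtain u where u: "u \<in> Bset a M" and ys: "ys = ?g u" by blast
      have "2 \<le> length u" using u by (simp add: Bset_def)
      then obtain zs x y where uz: "u = zs @ [x, y]" using two_split by blast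
      with u have xy: "y = x" by (auto simp: Bset_def nth_append)
      have ys2: "ys = zs @ [x, Suc x]" using ys uz xy by (simp add: butlast_append)
      show "ys \<in> Cset a (Suc M)" using u unfolding ys2 uz xy
        by (auto simp: Bset_def Cset_def Aset_def up_snoc2 hd_append nth_append)
    next
      assume c: "ys \<in> Cset a (Suc M)"
      have "2 \<le> length ys" using c by (simp add: Cset_def)
      then obtain zs x y where yz: "ys = zs @ [x, y]" using two_split by blast
      with c have "y \<noteq> x" "up (zs @ [x, y])" by (auto simp: Cset_def Aset_def nth_append)
      then have y: "y = Suc x" by (simp add: up_snoc2)
      have "zs @ [x, x] \<in> Bset a M" using c unfolding yz y
        by (auto simp: Bset_def Cset_def Aset_def up_snoc2 hd_append nth_append)
      moreover have "ys = ?g (zs @ [x, x])" unfolding yz y by (simp add: butlast_append)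
      ultimately show "ys \<in> ?g ` Bset a M" by blast
    qed
  qed
  show ?thesis using card_image[OF inj] img by simp
qed



definition Eset :: "nat \<Rightarrow> nat \<Rightarrow> nat list set" where
  "Eset n a = {xs. sorted_wrt (>) xs \<and> (\<forall>x\<in>set xs. 0 < x) \<and> xs \<noteq> [] \<and> hd xs = a \<and> sum_list xs = n}"

definition Kset :: "nat \<Rightarrow> nat \<Rightarrow> nat list set" where
  "Kset n L = {ys \<in> Aset 1 n. length ys = L}"

lemma E_fin: "finite (Eset n a)"
  by (rule finite_subset[OF _ fin_pos[of n]]) (auto simp: Eset_def)

lemma K_fin: "finite (Kset n L)"
  using Aset_fin[of 1 n] by (auto simp: Kset_def)

lemma E_small: "n < a \<Longrightarrow> Eset n a = {}"
proof -
  assume "n < a"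
  { fix ys assume "ys \<in> Eset n a"
    then have "hd ys \<in> set ys" "sum_list ys = n" "hd ys = a" unfolding Eset_def by auto
    then have "a \<le> n" using member_le_sum_list[of "hd ys" ys] by fastforce }
  then show ?thesis using \<open>n < a\<close> by fastforce
qed

lemma K_small: "n < L \<Longrightarrow> Kset n L = {}"
proof -
  assume "n < L"
  { fix ys assume "ys \<in> Kset n L"
    then have "length ys \<le> n" "length ys = L" using len_le_sum[OF Aset_pos[of 1 ys n]]
      by (auto simp: Kset_def Aset_def)
    then have False using \<open>n < L\<close> by simp }
  then show ?thesis by blast
qed

lemma E_zero: "Eset n 0 = {}"
  by (auto simp: Eset_def) (metis hd_in_set less_irrefl)

lemma K_zero: "Kset n 0 = {}"
  by (auto simp: Kset_def Aset_def)

lemma E_one: "Eset n 1 = (if n = 1 then {[1]} else {})"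
proof (rule set_eqI)
  fix xs
  show "xs \<in> Eset n 1 \<longleftrightarrow> xs \<in> (if n = 1 then {[1]} else {})"
  proof
    assume "xs \<in> Eset n 1"
    then obtain r where xs: "xs = 1 # r" and "\<forall>y\<in>set r. y < 1" "\<forall>y\<in>set r. 0 < y" and s: "1 + sum_list r = n"
      unfolding Eset_def by (cases xs) auto
    then have "r = []" by (cases r) auto
    with xs s show "xs \<in> (if n = 1 then {[1]} else {})" by simp
  next
    assume "xs \<in> (if n = 1 then {[1]} else {})"
    then show "xs \<in> Eset n 1" by (auto simp: Eset_def split: if_splits)
  qed
qed

lemma K_one: "Kset n 1 = (if n = 1 then {[1]} else {})"
proof -
  { fix xs assume "xs \<in> Kset n 1"
    then obtain x where "xs = [x]" "x = 1" "n = 1" unfolding Kset_def Aset_def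
      by (cases xs) auto
    then have "xs = [1] \<and> n = 1" by simp }
  then show ?thesis by (auto simp: Kset_def Aset_def)
qed

lemma E_rec:
  assumes a: "2 \<le> a" and an: "a \<le> n"
  shows "card (Eset n a) = card (Eset (n-1) (a-1)) + card (Eset (n-a) (a-1))"
proof -
  let ?f = "\<lambda>xs. a # tl xs"
  have inj1: "inj_on ?f (Eset (n-1) (a-1))"
  proof (rule inj_onI)
    fix u v assume uv: "u \<in> Eset (n-1) (a-1)" "v \<in> Eset (n-1) (a-1)" and e: "?f u = ?f v"
    from uv have "u \<noteq> []" "v \<noteq> []" "hd u = hd v" by (auto simp: Eset_def)
    moreover have "tl u = tl v" using e by simp
    ultimately show "u = v" by (metis list.collapse)
  qed
  have disj: "?f ` Eset (n-1) (a-1) \<inter> (Cons a) ` Eset (n-a) (a-1) = {}"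
  proof -
    { fix u v assume u: "u \<in> Eset (n-1) (a-1)" and v: "v \<in> Eset (n-a) (a-1)" and e: "?f u = a # v"
      from u obtain r where ur: "u = (a-1) # r" unfolding Eset_def by (cases u) auto
      with e have "v = r" by simp
      with v have "r \<noteq> []" "hd r = a - 1" unfolding Eset_def by auto
      moreover from u ur have "\<forall>y\<in>set r. y < a - 1" unfolding Eset_def by auto
      ultimately have False by (metis hd_in_set less_irrefl) }
    then show ?thesis by blast
  qed
  have eq: "Eset n a = ?f ` Eset (n-1) (a-1) \<union> (Cons a) ` Eset (n-a) (a-1)"
  proof (rule set_eqI)
    fix xs show "xs \<in> Eset n a \<longleftrightarrow> xs \<in> ?f ` Eset (n-1) (a-1) \<union> (Cons a) ` Eset (n-a) (a-1)"
    proof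
      assume h: "xs \<in> Eset n a"
      then obtain r where xs: "xs = a # r" unfolding Eset_def by (cases xs) auto
      from h xs have sr: "sorted_wrt (>) r" and lt: "\<forall>y\<in>set r. y < a" and pos: "\<forall>y\<in>set r. 0 < y"
        and sm: "a + sum_list r = n" unfolding Eset_def by auto
      show "xs \<in> ?f ` Eset (n-1) (a-1) \<union> (Cons a) ` Eset (n-a) (a-1)"
      proof (cases "r \<noteq> [] \<and> hd r = a - 1")
        case True
        then have "r \<in> Eset (n-a) (a-1)" using sr pos sm unfolding Eset_def by auto
        then show ?thesis using xs by blast
      next
        case False
        have "\<forall>y\<in>set r. y < a - 1"
        proof
          fix y assume y: "y \<in> set r"
          then have r: "r \<noteq> []" by auto
          have "y \<le> hd r" using sr y r by (cases r) auto
          moreover have "hd r < a" using lt r by simp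
          moreover have "hd r \<noteq> a - 1" using False r by simp
          ultimately show "y < a - 1" by linarith
        qed
        then have "(a-1) # r \<in> Eset (n-1) (a-1)" using sr pos sm a unfolding Eset_def by auto
        moreover have "xs = ?f ((a-1) # r)" using xs by simp
        ultimately show ?thesis by blast
      qed
    next
      assume "xs \<in> ?f ` Eset (n-1) (a-1) \<union> (Cons a) ` Eset (n-a) (a-1)"
      then show "xs \<in> Eset n a"
      proof
        assume "xs \<in> ?f ` Eset (n-1) (a-1)"
        then obtain u where u: "u \<in> Eset (n-1) (a-1)" and xs: "xs = ?f u" by blast
        from u obtain r where ur: "u = (a-1) # r" unfolding Eset_def by (cases u) auto
        from u ur have "sorted_wrt (>) r" "\<forall>y\<in>set r. y < a - 1" "\<forall>y\<in>set r. 0 < y" "a - 1 + sum_list r = n - 1"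
          unfolding Eset_def by auto
        then show "xs \<in> Eset n a" using xs ur a an unfolding Eset_def by auto
      next
        assume "xs \<in> (Cons a) ` Eset (n-a) (a-1)"
        then obtain r where r: "r \<in> Eset (n-a) (a-1)" and xs: "xs = a # r" by blast
        from r have "\<forall>y\<in>set r. y \<le> a - 1" unfolding Eset_def by (cases r) auto
        then have "\<forall>y\<in>set r. y < a" using a by fastforce
        then show "xs \<in> Eset n a" using r xs a an unfolding Eset_def by auto
      qed
    qed
  qed
  have "card (Eset n a) = card (?f ` Eset (n-1) (a-1)) + card ((Cons a) ` Eset (n-a) (a-1))"
    unfolding eq by (rule card_Un_disjoint) (use disj E_fin in auto)
  then show ?thesis using card_image[OF inj1] card_image[of "Cons a" "Eset (n-a) (a-1)"] by simp
qed

lemma sum_map_Suc: "sum_list (map Suc zs) = sum_list zs + length zs"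
  by (induction zs) auto

lemma K_rec:
  assumes L: "2 \<le> L" and Ln: "L \<le> n"
  shows "card (Kset n L) = card (Kset (n-1) (L-1)) + card (Kset (n-L) (L-1))"
proof -
  let ?g = "\<lambda>zs. 1 # map Suc zs"
  have inj2: "inj_on ?g (Kset (n-L) (L-1))"
    by (rule inj_onI) (simp add: map_injective inj_def)
  have disj: "(Cons 1) ` Kset (n-1) (L-1) \<inter> ?g ` Kset (n-L) (L-1) = {}"
  proof -
    { fix u v assume u: "u \<in> Kset (n-1) (L-1)" and v: "v \<in> Kset (n-L) (L-1)" and e: "1 # u = ?g v"
      then have "u = map Suc v" by simp
      moreover from u have "u \<noteq> []" "hd u = 1" by (auto simp: Kset_def Aset_def)
      moreover from v have "v \<noteq> []" "hd v = 1" by (auto simp: Kset_def Aset_def)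
      ultimately have False by (cases v) auto }
    then show ?thesis by blast
  qed
  have eq: "Kset n L = (Cons 1) ` Kset (n-1) (L-1) \<union> ?g ` Kset (n-L) (L-1)"
  proof (rule set_eqI)
    fix ys show "ys \<in> Kset n L \<longleftrightarrow> ys \<in> (Cons 1) ` Kset (n-1) (L-1) \<union> ?g ` Kset (n-L) (L-1)"
    proof
      assume h: "ys \<in> Kset n L"
      then obtain r where ys: "ys = 1 # r" unfolding Kset_def Aset_def by (cases ys) auto
      from h ys L have rne: "r \<noteq> []" and len: "length r = L - 1" and sm: "1 + sum_list r = n"
        and ur: "up r" and hr: "hd r = 1 \<or> hd r = 2"
        unfolding Kset_def Aset_def by (auto simp: up_Cons)
      show "ys \<in> (Cons 1) ` Kset (n-1) (L-1) \<union> ?g ` Kset (n-L) (L-1)"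
      proof (cases "hd r = 1")
        case True
        then have "r \<in> Kset (n-1) (L-1)" using rne len sm ur unfolding Kset_def Aset_def by auto
        then show ?thesis using ys by blast
      next
        case False
        with hr have h2: "hd r = 2" by simp
        have ge: "\<forall>y\<in>set r. 2 \<le> y" using up_hd_le[OF ur rne] h2 by simp
        define zs where "zs = map (\<lambda>x. x - 1) r"
        have rz: "r = map Suc zs" unfolding zs_def using ge by (induction r) auto
        have "up zs" using ur rz up_map_Suc by simp
        moreover have "zs \<noteq> []" "hd zs = 1" using rne h2 rz by (cases zs; auto)+
        moreover have "length zs = L - 1" using len rz by simp
        moreover have "sum_list zs = n - L" using sm rz len sum_map_Suc[of zs] L by simp
        ultimately have "zs \<in> Kset (n-L) (L-1)" unfolding Kset_def Aset_def by auto
        then show ?thesis using ys rz by blast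
      qed
    next
      assume "ys \<in> (Cons 1) ` Kset (n-1) (L-1) \<union> ?g ` Kset (n-L) (L-1)"
      then show "ys \<in> Kset n L"
      proof
        assume "ys \<in> (Cons 1) ` Kset (n-1) (L-1)"
        then obtain r where r: "r \<in> Kset (n-1) (L-1)" and ys: "ys = 1 # r" by blast
        then show "ys \<in> Kset n L" using L Ln unfolding Kset_def Aset_def by (auto simp: up_Cons)
      next
        assume "ys \<in> ?g ` Kset (n-L) (L-1)"
        then obtain zs where z: "zs \<in> Kset (n-L) (L-1)" and ys: "ys = ?g zs" by blast
        from z have zne: "zs \<noteq> []" and "hd zs = 1" "up zs" "length zs = L - 1" "sum_list zs = n - L"
          unfolding Kset_def Aset_def by auto
        moreover have "hd (map Suc zs) = 2" using zne \<open>hd zs = 1\<close> by (cases zs) auto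
        ultimately show "ys \<in> Kset n L" using L Ln ys sum_map_Suc[of zs] unfolding Kset_def Aset_def
          by (auto simp: up_Cons up_map_Suc)
      qed
    qed
  qed
  have "card (Kset n L) = card ((Cons 1) ` Kset (n-1) (L-1)) + card (?g ` Kset (n-L) (L-1))"
    unfolding eq by (rule card_Un_disjoint) (use disj K_fin in auto)
  then show ?thesis using card_image[OF inj2] card_image[of "Cons 1" "Kset (n-1) (L-1)"] by simp
qed

lemma E_K: "card (Eset n a) = card (Kset n a)"
proof (induction a arbitrary: n)
  case 0 then show ?case by (simp add: E_zero K_zero)
next
  case (Suc a)
  show ?case
  proof (cases "a = 0")
    case True then have "Suc a = 1" by simp
    show ?thesis unfolding \<open>Suc a = 1\<close> E_one K_one by simp
  next
    case False
    show ?thesis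
    proof (cases "n < Suc a")
      case True then show ?thesis by (simp add: E_small K_small)
    next
      case nlt: False
      have "card (Eset n (Suc a)) = card (Eset (n-1) a) + card (Eset (n - Suc a) a)"
        using E_rec[of "Suc a" n] False nlt by simp
      also have "\<dots> = card (Kset (n-1) a) + card (Kset (n - Suc a) a)" using Suc by simp
      also have "\<dots> = card (Kset n (Suc a))" using K_rec[of "Suc a" n] False nlt by simp
      finally show ?thesis .
    qed
  qed
qed



lemma sd: "(sorted_wrt (\<ge>) xs \<and> distinct xs) \<longleftrightarrow> sorted_wrt (>) (xs::nat list)"
  by (induction xs) (auto simp: less_le)

lemma dist_card: "card {xs \<in> partitions n. distinct xs} = (if n = 0 then 1 else 0) + card (Aset 1 n)"
proof -
  let ?Z = "(if n = 0 then {[]} else {}) :: nat list set"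
  have eq1: "{xs \<in> partitions n. distinct xs} = ?Z \<union> (\<Union>a\<in>{1..n}. Eset n a)"
  proof (rule set_eqI)
    fix xs show "xs \<in> {xs \<in> partitions n. distinct xs} \<longleftrightarrow> xs \<in> ?Z \<union> (\<Union>a\<in>{1..n}. Eset n a)"
    proof
      assume h: "xs \<in> {xs \<in> partitions n. distinct xs}"
      then have s: "sorted_wrt (>) xs" "\<forall>x\<in>set xs. 0 < x" "sum_list xs = n"
        using sd unfolding partitions_def by auto
      show "xs \<in> ?Z \<union> (\<Union>a\<in>{1..n}. Eset n a)"
      proof (cases "xs = []")
        case True then show ?thesis using s by simp
      next
        case False
        then have "hd xs \<in> set xs" by simp
        then have "1 \<le> hd xs" "hd xs \<le> n" using s member_le_sum_list[of "hd xs" xs] by auto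
        moreover have "xs \<in> Eset n (hd xs)" using s False unfolding Eset_def by auto
        ultimately show ?thesis by auto
      qed
    next
      assume "xs \<in> ?Z \<union> (\<Union>a\<in>{1..n}. Eset n a)"
      then have "sorted_wrt (>) xs \<and> (\<forall>x\<in>set xs. 0 < x) \<and> sum_list xs = n"
        by (auto simp: Eset_def split: if_splits)
      then show "xs \<in> {xs \<in> partitions n. distinct xs}" using sd unfolding partitions_def by auto
    qed
  qed
  have eq2: "Aset 1 n = (\<Union>L\<in>{1..n}. Kset n L)"
  proof (rule set_eqI)
    fix ys show "ys \<in> Aset 1 n \<longleftrightarrow> ys \<in> (\<Union>L\<in>{1..n}. Kset n L)"
    proof
      assume h: "ys \<in> Aset 1 n"
      then have "length ys \<le> n" using len_le_sum[OF Aset_pos[of 1 ys n]] by (auto simp: Aset_def)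
      moreover have "1 \<le> length ys" using h by (cases ys) (auto simp: Aset_def)
      ultimately show "ys \<in> (\<Union>L\<in>{1..n}. Kset n L)" using h unfolding Kset_def by auto
    next
      assume "ys \<in> (\<Union>L\<in>{1..n}. Kset n L)"
      then show "ys \<in> Aset 1 n" unfolding Kset_def by auto
    qed
  qed
  have c1: "card (\<Union>a\<in>{1..n}. Eset n a) = (\<Sum>a\<in>{1..n}. card (Eset n a))"
    apply (rule card_UN_disjoint)
      apply simp
     apply (simp add: E_fin)
    apply (auto simp: Eset_def)
    done
  have c2: "card (\<Union>L\<in>{1..n}. Kset n L) = (\<Sum>L\<in>{1..n}. card (Kset n L))"
    apply (rule card_UN_disjoint)
      apply simp
     apply (simp add: K_fin)
    apply (auto simp: Kset_def)
    done
  have "card {xs \<in> partitions n. distinct xs} = card ?Z + card (\<Union>a\<in>{1..n}. Eset n a)"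
    unfolding eq1
    apply (rule card_Un_disjoint)
      apply simp
     apply (simp add: E_fin)
    apply (auto simp: Eset_def)
    done
  also have "card (\<Union>a\<in>{1..n}. Eset n a) = card (Aset 1 n)"
    unfolding c1 eq2 c2 using E_K by simp
  finally show ?thesis by simp
qed

lemma qA: "1 \<le> n \<Longrightarrow> q (int n) = int (card (Aset 1 n))"
  unfolding q_def using dist_card[of n] by simp

lemma rev_adj:
  "(\<forall>j. j + 1 < length xs \<longrightarrow> P (xs ! j) (xs ! (j+1))) \<longleftrightarrow>
   (\<forall>i. Suc i < length xs \<longrightarrow> P (rev xs ! Suc i) (rev xs ! i))"
proof
  assume h: "\<forall>j. j + 1 < length xs \<longrightarrow> P (xs ! j) (xs ! (j+1))"
  show "\<forall>i. Suc i < length xs \<longrightarrow> P (rev xs ! Suc i) (rev xs ! i)"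
  proof (intro allI impI)
    fix i assume i: "Suc i < length xs"
    have e: "length xs - Suc i = (length xs - Suc (Suc i)) + 1" using i by simp
    show "P (rev xs ! Suc i) (rev xs ! i)"
      using h[rule_format, of "length xs - Suc (Suc i)"] i by (simp add: rev_nth e)
  qed
next
  assume h: "\<forall>i. Suc i < length xs \<longrightarrow> P (rev xs ! Suc i) (rev xs ! i)"
  show "\<forall>j. j + 1 < length xs \<longrightarrow> P (xs ! j) (xs ! (j+1))"
  proof (intro allI impI)
    fix j assume j: "j + 1 < length xs"
    have e1: "length xs - Suc (length xs - Suc (Suc j)) = j + 1" using j by simp
    have e2: "length xs - Suc (Suc (length xs - Suc (Suc j))) = j" using j by simp
    show "P (xs ! j) (xs ! (j+1))"
      using h[rule_format, of "length xs - Suc (Suc j)"] j by (simp add: rev_nth e1 e2)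
  qed
qed

definition Fset :: "nat \<Rightarrow> nat list set" where
  "Fset n = {xs \<in> partitions n.
            length xs \<ge> 3
          \<and> (\<forall>j. j + 1 < length xs \<longrightarrow> xs ! j - xs ! (j + 1) \<in> {0, 1})
          \<and> xs ! 0 = xs ! 1
          \<and> xs ! (length xs - 2) = 3
          \<and> xs ! (length xs - 1) = 3}"

definition Hp :: "nat \<Rightarrow> nat list \<Rightarrow> bool" where
  "Hp n ys \<longleftrightarrow> up ys \<and> 3 \<le> length ys \<and> ys ! 0 = 3 \<and> ys ! 1 = 3
     \<and> ys ! (length ys - 1) = ys ! (length ys - 2) \<and> sum_list ys = n"

lemma up_sorted: "up ys \<Longrightarrow> sorted ys"
  unfolding sorted_iff_nth_Suc using up_nth by fastforce

lemma F_H: "xs \<in> Fset n \<longleftrightarrow> Hp n (rev xs)"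
proof -
  let ?L = "length xs"
  have adj: "(\<forall>j. j + 1 < ?L \<longrightarrow> xs ! j - xs ! (j + 1) \<in> {0, 1}) \<longleftrightarrow>
        (\<forall>i. Suc i < ?L \<longrightarrow> rev xs ! Suc i - rev xs ! i \<in> {0, 1})"
    using rev_adj[of xs "\<lambda>u v. u - v \<in> {0,1}"] by simp
  have srt: "sorted_wrt (\<ge>) xs \<longleftrightarrow> sorted (rev xs)"
    by (simp add: sorted_wrt_rev)
  show ?thesis
  proof
    assume h: "xs \<in> Fset n"
    let ?ys = "rev xs"
    from h have L: "3 \<le> ?L" and s: "sorted ?ys" and d: "\<forall>i. Suc i < ?L \<longrightarrow> ?ys ! Suc i - ?ys ! i \<in> {0, 1}"
      and sm: "sum_list xs = n"
      unfolding Fset_def partitions_def using adj srt by auto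
    have r0: "?ys ! 0 = xs ! (?L - 1)" using L by (subst rev_nth) (auto simp: numeral_2_eq_2)
    have r1: "?ys ! 1 = xs ! (?L - 2)" using L by (subst rev_nth) (auto simp: numeral_2_eq_2)
    have r2: "?ys ! (length ?ys - 1) = xs ! 0" using L by (subst rev_nth) (auto simp: numeral_2_eq_2)
    have r3: "?ys ! (length ?ys - 2) = xs ! 1" using L by (subst rev_nth) (auto simp: numeral_2_eq_2)
    have "up ?ys" unfolding up_nth
    proof (intro allI impI)
      fix j assume j: "Suc j < length ?ys"
      then have "?ys ! j \<le> ?ys ! Suc j" using s unfolding sorted_iff_nth_Suc by simp
      moreover have "?ys ! Suc j - ?ys ! j \<in> {0,1}" using d j by simp
      ultimately show "?ys ! Suc j = ?ys ! j \<or> ?ys ! Suc j = Suc (?ys ! j)" by auto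
    qed
    moreover have "?ys ! 0 = 3" "?ys ! 1 = 3" "?ys ! (length ?ys - 1) = ?ys ! (length ?ys - 2)"
      using h unfolding Fset_def r0 r1 r2 r3 by auto
    ultimately show "Hp n ?ys" using L sm unfolding Hp_def by simp
  next
    assume h: "Hp n (rev xs)"
    let ?ys = "rev xs"
    from h have u: "up ?ys" and L: "3 \<le> ?L" unfolding Hp_def by auto
    have ne: "?ys \<noteq> []" using L by auto
    have hd3: "hd ?ys = 3" using h ne unfolding Hp_def by (simp add: hd_conv_nth)
    have pos: "\<forall>x\<in>set xs. 0 < x" using up_hd_le[OF u ne] hd3 by auto
    have s: "sorted_wrt (\<ge>) xs" using up_sorted[OF u] srt by simp
    have d: "\<forall>i. Suc i < ?L \<longrightarrow> ?ys ! Suc i - ?ys ! i \<in> {0, 1}"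
    proof (intro allI impI)
      fix i assume "Suc i < ?L"
      then have "?ys ! Suc i = ?ys ! i \<or> ?ys ! Suc i = Suc (?ys ! i)" using u unfolding up_nth by simp
      then show "?ys ! Suc i - ?ys ! i \<in> {0, 1}" by auto
    qed
    have r0: "?ys ! 0 = xs ! (?L - 1)" using L by (subst rev_nth) (auto simp: numeral_2_eq_2)
    have r1: "?ys ! 1 = xs ! (?L - 2)" using L by (subst rev_nth) (auto simp: numeral_2_eq_2)
    have r2: "?ys ! (length ?ys - 1) = xs ! 0" using L by (subst rev_nth) (auto simp: numeral_2_eq_2)
    have r3: "?ys ! (length ?ys - 2) = xs ! 1" using L by (subst rev_nth) (auto simp: numeral_2_eq_2)
    have "xs ! 0 = xs ! 1" "xs ! (?L - 2) = 3" "xs ! (?L - 1) = 3"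
      using h unfolding Hp_def r0 r1 r2 r3 by auto
    then show "xs \<in> Fset n" using pos s d adj L h unfolding Fset_def partitions_def Hp_def by simp
  qed
qed

lemma H_B:
  assumes "3 \<le> n"
  shows "{ys. Hp n ys} = (Cons 3) ` Bset 3 (n - 3)"
proof (rule set_eqI)
  fix ys show "ys \<in> {ys. Hp n ys} \<longleftrightarrow> ys \<in> (Cons 3) ` Bset 3 (n - 3)"
  proof
    assume "ys \<in> {ys. Hp n ys}"
    then have h: "Hp n ys" by simp
    then obtain zs where ys: "ys = 3 # zs" unfolding Hp_def by (cases ys) auto
    from h ys have zne: "zs \<noteq> []" unfolding Hp_def by auto
    with h ys have "hd zs = 3" unfolding Hp_def by (simp add: hd_conv_nth)
    with h ys zne have "zs \<noteq> []" "up zs" "hd zs = 3" "2 \<le> length zs" "sum_list zs = n - 3"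
      "zs ! (length zs - 1) = zs ! (length zs - 2)"
      unfolding Hp_def by (auto simp: up_Cons hd_conv_nth nth_Cons split: nat.splits)
    then show "ys \<in> (Cons 3) ` Bset 3 (n - 3)" unfolding ys Bset_def Aset_def by auto
  next
    assume "ys \<in> (Cons 3) ` Bset 3 (n - 3)"
    then obtain zs where ys: "ys = 3 # zs" and z: "zs \<in> Bset 3 (n - 3)" by blast
    from z have "zs \<noteq> []" "up zs" "hd zs = 3" "2 \<le> length zs" "sum_list zs = n - 3"
      "zs ! (length zs - 1) = zs ! (length zs - 2)"
      unfolding Bset_def Aset_def by auto
    then show "ys \<in> {ys. Hp n ys}" using assms unfolding ys Hp_def
      by (auto simp: up_Cons hd_conv_nth nth_Cons split: nat.splits)
  qed
qed

lemma F_card: "3 \<le> n \<Longrightarrow> card (Fset n) = card (Bset 3 (n - 3))"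
proof -
  assume n: "3 \<le> n"
  have "Fset n = rev ` {ys. Hp n ys}"
    using F_H by (auto simp: image_iff) (metis rev_rev_ident)
  then have "card (Fset n) = card {ys. Hp n ys}" by (simp add: card_image)
  also have "\<dots> = card (Bset 3 (n - 3))" unfolding H_B[OF n] by (simp add: card_image)
  finally show ?thesis .
qed



abbreviation cA :: "nat \<Rightarrow> nat \<Rightarrow> int" where "cA a N \<equiv> int (card (Aset a N))"
abbreviation cB :: "nat \<Rightarrow> nat \<Rightarrow> int" where "cB a N \<equiv> int (card (Bset a N))"

lemma A1_rec: "1 \<le> N \<Longrightarrow> cA 1 (Suc N) = cA 1 N + cA 2 N"
  using A_rec[of 1 "Suc N"] by (simp add: eval_nat_numeral)

lemma A2_rec: "cA 2 (M + 3) = cA 2 (M + 1) + cA 3 (M + 1)"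
  using A_rec[of 2 "M + 3"] by (simp add: eval_nat_numeral)

lemma A3_B: "cA 3 (M + 4) = cB 3 (M + 4) + cB 3 (M + 3)"
  using A_split[of 3 "M + 4"] C_Suc[of 3 "M + 3"] by (simp add: eval_nat_numeral)

lemma s_A2: "s (int (m + 3)) = cA 2 (m + 2) - cA 2 (m + 1)"
proof -
  have q1: "q (int (m + 3)) = cA 1 (m + 3)" by (rule qA) simp
  have q2: "q (int (m + 3) - 1) = cA 1 (m + 2)" using qA[of "m + 2"] by (simp add: algebra_simps eval_nat_numeral)
  have q3: "q (int (m + 3) - 2) = cA 1 (m + 1)" using qA[of "m + 1"] by (simp add: algebra_simps eval_nat_numeral)
  have e1: "cA 1 (m + 3) = cA 1 (m + 2) + cA 2 (m + 2)" using A1_rec[of "m + 2"] by (simp add: eval_nat_numeral)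
  have e2: "cA 1 (m + 2) = cA 1 (m + 1) + cA 2 (m + 1)" using A1_rec[of "m + 1"] by (simp add: eval_nat_numeral)
  show ?thesis unfolding s_def q1 q2 q3 using e1 e2 by (simp add: eval_nat_numeral)
qed

lemma key: "s (int (m + 8)) - cB 3 (m + 5) = s (int (m + 6)) - cB 3 (m + 3)"
proof -
  have a: "s (int (m + 8)) = cA 2 (m + 7) - cA 2 (m + 6)" using s_A2[of "m + 5"] by (simp add: algebra_simps eval_nat_numeral)
  have b: "s (int (m + 6)) = cA 2 (m + 5) - cA 2 (m + 4)" using s_A2[of "m + 3"] by (simp add: algebra_simps eval_nat_numeral)
  have c: "cA 2 (m + 7) = cA 2 (m + 5) + cA 3 (m + 5)" using A2_rec[of "m + 4"] by (simp add: algebra_simps eval_nat_numeral)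
  have d: "cA 2 (m + 6) = cA 2 (m + 4) + cA 3 (m + 4)" using A2_rec[of "m + 3"] by (simp add: algebra_simps eval_nat_numeral)
  have e: "cA 3 (m + 5) = cB 3 (m + 5) + cB 3 (m + 4)" using A3_B[of "m + 1"] by (simp add: algebra_simps eval_nat_numeral)
  have f: "cA 3 (m + 4) = cB 3 (m + 4) + cB 3 (m + 3)" using A3_B[of m] by (simp add: algebra_simps eval_nat_numeral)
  show ?thesis using a b c d e f by (simp add: eval_nat_numeral)
qed

lemma A_val:
  "cA 2 2 = 1" "cA 2 3 = 0" "cA 2 4 = 1" "cA 2 5 = 1" "cA 2 6 = 1" "cA 3 3 = 1" "cA 3 4 = 0"
proof -
  have z: "Aset a N = {}" if "N < a" for a N using Aset_small[OF that] .
  have r2: "cA 2 (M + 2) = (if M = 0 then 1 else 0) + cA 2 M + cA 3 M" for M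
    using A_rec[of 2 "M + 2"] by (simp add: eval_nat_numeral)
  have r3: "cA 3 (M + 3) = (if M = 0 then 1 else 0) + cA 3 M + cA 4 M" for M
    using A_rec[of 3 "M + 3"] by (simp add: eval_nat_numeral)
  show "cA 2 2 = 1" using r2[of 0] z[of 0 2] z[of 0 3] by (simp add: eval_nat_numeral)
  show "cA 2 3 = 0" using r2[of 1] z[of 1 2] z[of 1 3] by (simp add: eval_nat_numeral)
  show "cA 3 3 = 1" using r3[of 0] z[of 0 3] z[of 0 4] by (simp add: eval_nat_numeral)
  show "cA 3 4 = 0" using r3[of 1] z[of 1 3] z[of 1 4] by (simp add: eval_nat_numeral)
  have "cA 3 2 = 0" using z[of 2 3] by (simp add: eval_nat_numeral)
  then show "cA 2 4 = 1" using r2[of 2] \<open>cA 2 2 = 1\<close> by (simp add: eval_nat_numeral)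
  show "cA 2 5 = 1" using r2[of 3] \<open>cA 2 3 = 0\<close> \<open>cA 3 3 = 1\<close> by (simp add: eval_nat_numeral)
  show "cA 2 6 = 1" using r2[of 4] \<open>cA 2 4 = 1\<close> \<open>cA 3 4 = 0\<close> by (simp add: eval_nat_numeral)
qed

lemma B_val: "cB 3 3 = 0" "cB 3 4 = 0"
proof -
  have a3: "cA 3 3 = 1 + cB 3 3 + cB 3 2"
    using A_split[of 3 3] C_Suc[of 3 2] by (simp add: eval_nat_numeral)
  have a4: "cA 3 4 = cB 3 4 + cB 3 3"
    using A_split[of 3 4] C_Suc[of 3 3] by (simp add: eval_nat_numeral)
  show "cB 3 3 = 0" using a3 A_val by (simp add: eval_nat_numeral)
  show "cB 3 4 = 0" using a4 A_val \<open>cB 3 3 = 0\<close> by (simp add: eval_nat_numeral)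
qed

lemma main: "6 \<le> n \<Longrightarrow> s (int n) = cB 3 (n - 3)"
proof (induction n rule: less_induct)
  case (less n)
  show ?case
  proof (cases "n = 6 \<or> n = 7")
    case True
    then show ?thesis
    proof
      assume n: "n = 6"
      have "s (int n) = cA 2 5 - cA 2 4" using s_A2[of 3] n by (simp add: eval_nat_numeral)
      then show ?thesis using A_val B_val n by (simp add: eval_nat_numeral)
    next
      assume n: "n = 7"
      have "s (int n) = cA 2 6 - cA 2 5" using s_A2[of 4] n by (simp add: eval_nat_numeral)
      then show ?thesis using A_val B_val n by (simp add: eval_nat_numeral)
    qed
  next
    case False
    define m where "m = n - 8"
    have n: "n = m + 8" using less.prems False unfolding m_def by simp
    have ih: "s (int (m + 6)) = cB 3 (m + 3)" using less.IH[of "m + 6"] n by (simp add: eval_nat_numeral)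
    show ?thesis using key[of m] ih n by (simp add: eval_nat_numeral)
  qed
qed


theorem corollary1p6:
  fixes n :: nat
  assumes "n \<ge> 6"
  shows "s (int n) = int (card {xs \<in> partitions n.
            length xs \<ge> 3
          \<and> (\<forall>j. j + 1 < length xs \<longrightarrow> xs ! j - xs ! (j + 1) \<in> {0, 1})
          \<and> xs ! 0 = xs ! 1
          \<and> xs ! (length xs - 2) = 3
          \<and> xs ! (length xs - 1) = 3})"
proof -
  have "s (int n) = int (card (Fset n))" using main[OF assms] F_card[of n] assms by simp
  then show ?thesis by (simp add: Fset_def)
qed

end
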